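(* Let $A\subset\mathbb{R}^N$ be nonempty and closed, let $H:[0,\infty)\times\mathbb{R}^N\times\mathbb{R}^N\to\mathbb{R}$, and let $(U,f,l)$ be a triple satisfying $(h)''$ relative to $A$ which is a representation of $H$, i.e. $H(t,x,p)=\sup_{u\in U(t)}\{\langle p,f(t,x,u)\rangle-l(t,x,u)\}$ for all $t,x,p$. Then a function $W:[0,\infty)\times A\to\mathbb{R}\cup\{+\infty\}$ is a weak solution of $-W_t+H(t,x,-W_x)=0$ on $(0,\infty)\times A$ in the sense of Definition I if and only if it is a weak solution in the sense of Definition II.
   Context: $H^*(t,x,v)=\sup_{p}\{\langle v,p\rangle-H(t,x,p)\}$, $\mathrm{dom}\,H^*(t,x,\cdot)=\{v:H^*(t,x,v)<+\infty\}$. $\mathrm{bd}A,\mathrm{int}A$ are boundary and interior. $W$ is viewed as a function on $\mathbb{R}\times\mathbb{R}^N$ equal to $+\infty$ outside $[0,\infty)\times A$; $\mathrm{dom}\,W=\{W<+\infty\}$, $\mathrm{epi}\,W$ its epigraph. For $\varphi:\mathbb{R}^d\to\mathbb{R}\cup\{+\infty\}$ and $z\in\mathrm{dom}\,\varphi$, $\partial\varphi(z)=\{p:\liminf_{y\to z}(\varphi(y)-\varphi(z)-\langle p,y-z\rangle)/|y-z|\ge0\}$. For $C\subset\mathbb{R}^d$, $T_C(z)=\{\zeta:\liminf_{\tau\to0+}\mathrm{dist}(z+\tau\zeta,C)/\tau=0\}$ and $N_C(z)=\{\xi:\langle\zeta,\xi\rangle\le0\ \forall\zeta\in T_C(z)\}$.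 Definition I: a lower semicontinuous $W:[0,\infty)\times A\to\mathbb{R}\cup\{+\infty\}$ is a weak solution if there is a set $C\subset(0,\infty)$ of full measure such that for all $(t,x)\in\mathrm{dom}W\cap(C\times\mathrm{bd}A)$: $-p_t+H(t,x,-p_x)\ge0$ for all $(p_t,p_x)\in\partial W(t,x)$ and $-p_t+\sup_{v\in\mathrm{dom}H^*(t,x,\cdot)}\langle v,-p_x\rangle\ge0$ for all $(p_t,p_x,0)\in N_{\mathrm{epi}W}(t,x,W(t,x))$; and for all $(t,x)\in\mathrm{dom}W\cap(C\times\mathrm{int}A)$ the same two relations hold with equality. Definition II: with $\bar H(t,x,p,q)=\sup_{u\in U(t)}\{\langle p,f(t,x,u)\rangle-q\,l(t,x,u)\}$, a lower semicontinuous $W$ is a weak solution if there is a set $C\subset(0,\infty)$ of full measure such that $-p_t+\bar H(t,x,-p_x,-q)\ge0$ for all $(p_t,p_x,q)\in N_{\mathrm{epi}W}(t,x,W(t,x))$ and all $(t,x)\in\mathrm{dom}W\cap(C\times\mathrm{bd}A)$, and $-p_t+\bar H(t,x,-p_x,-q)=0$ for all such normals and all $(t,x)\in\mathrm{dom}W\cap(C\times\mathrm{int}A)$. Condition $(h)''$ relative to $A$: $U:[0,\infty)\rightsquigarrow\mathbb{R}^M$ measurable with nonempty closed images; $f:[0,\infty)\times\mathbb{R}^N\times\mathbb{R}^M\to\mathbb{R}^N$, $l:[0,\infty)\times\mathbb{R}^N\times\mathbb{R}^M\to\mathbb{R}$ with (h1) measurability in $t$, continuity in $(x,u)$, and $l\ge\phi(t)$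 for some $\phi\in L^1([0,\infty);\mathbb{R})$; (h2) $|f|+|l|\le c(t)(1+|x|)$ on $u\in U(t)$, $c\in L^1_{\rm loc}([0,\infty);[0,\infty))$; (h3) $x\rightsquigarrow(f,l)(t,x,U(t))$ Hausdorff-continuous with closed images; (h4) $\{(f(t,x,u),l(t,x,u)+r):u\in U(t),r\ge0\}$ convex; (h5) $|f|+|l|\le q(t)$ for $x\in\mathrm{bd}A$, $u\in U(t)$; (h6) $|f(t,x,u)-f(t,y,u)|+|l(t,x,u)-l(t,y,u)|\le k(t)|x-y|$ for $u\in U(t)$; here $k,q\in\mathscr{L}_{\rm loc}$, the set of $\varphi\in L^1_{\rm loc}([0,\infty);[0,\infty))$ with $\lim_{\sigma\to0}\sup\{\int_I\varphi: I$ compact interval of length $\le\sigma\}=0$. *)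

theory Defs
  imports "HOL-Analysis.Analysis"
begin

definition ext_fun :: "'a set \<Rightarrow> (real \<times> 'a \<Rightarrow> ereal) \<Rightarrow> real \<times> 'a \<Rightarrow> ereal" where
  "ext_fun A W z = (if 0 \<le> fst z \<and> snd z \<in> A then W z else \<infinity>)"

definition lsc_on :: "'a::topological_space set \<Rightarrow> ('a \<Rightarrow> ereal) \<Rightarrow> bool" where
  "lsc_on S g \<longleftrightarrow> (\<forall>z\<in>S. \<forall>c. c < g z \<longrightarrow> eventually (\<lambda>y. c < g y) (at z within S))"

definition edom :: "('a \<Rightarrow> ereal) \<Rightarrow> 'a set" where
  "edom \<phi> = {z. \<phi> z < \<infinity>}"

definition epi :: "('a \<Rightarrow> ereal) \<Rightarrow> ('a \<times> real) set" where
  "epi \<phi> = {(z, r). \<phi> z \<le> ereal r}"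

definition frechet_subdiff :: "('a::real_inner \<Rightarrow> ereal) \<Rightarrow> 'a \<Rightarrow> 'a set" where
  "frechet_subdiff \<phi> z =
     {p. Liminf (at z) (\<lambda>y. (\<phi> y - \<phi> z - ereal (p \<bullet> (y - z))) / ereal (norm (y - z))) \<ge> 0}"

definition tangent_cone :: "'a::real_normed_vector set \<Rightarrow> 'a \<Rightarrow> 'a set" where
  "tangent_cone C z =
     {\<zeta>. Liminf (at_right (0::real)) (\<lambda>\<tau>. ereal (infdist (z + \<tau> *\<^sub>R \<zeta>) C / \<tau>)) = 0}"

definition normal_cone :: "'a::real_inner set \<Rightarrow> 'a \<Rightarrow> 'a set" where
  "normal_cone C z = {\<xi>. \<forall>\<zeta>\<in>tangent_cone C z. \<zeta> \<bullet> \<xi> \<le> 0}"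

definition conj_H :: "(real \<Rightarrow> 'a \<Rightarrow> 'a \<Rightarrow> real) \<Rightarrow> real \<Rightarrow> 'a \<Rightarrow> 'a::real_inner \<Rightarrow> ereal" where
  "conj_H H t x v = (SUP p. ereal (v \<bullet> p - H t x p))"

definition dom_conj :: "(real \<Rightarrow> 'a \<Rightarrow> 'a \<Rightarrow> real) \<Rightarrow> real \<Rightarrow> 'a::real_inner \<Rightarrow> 'a set" where
  "dom_conj H t x = {v. conj_H H t x v < \<infinity>}"

definition Hbar :: "(real \<Rightarrow> 'b set) \<Rightarrow> (real \<Rightarrow> 'a \<Rightarrow> 'b \<Rightarrow> 'a) \<Rightarrow> (real \<Rightarrow> 'a \<Rightarrow> 'b \<Rightarrow> real)
    \<Rightarrow> real \<Rightarrow> 'a::real_inner \<Rightarrow> 'a \<Rightarrow> real \<Rightarrow> ereal" where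
  "Hbar U f l t x p q = (SUP u\<in>U t. ereal (p \<bullet> f t x u - q * l t x u))"

definition full_measure_pos :: "real set \<Rightarrow> bool" where
  "full_measure_pos C \<longleftrightarrow> C \<subseteq> {0<..} \<and> {0<..} - C \<in> null_sets lebesgue"

definition weak_sol_I :: "'a::euclidean_space set \<Rightarrow> (real \<Rightarrow> 'a \<Rightarrow> 'a \<Rightarrow> real)
    \<Rightarrow> (real \<times> 'a \<Rightarrow> ereal) \<Rightarrow> bool" where
  "weak_sol_I A H W \<longleftrightarrow> lsc_on ({0..} \<times> A) W \<and>
    (\<exists>C. full_measure_pos C \<and>
      (\<forall>t x. (t, x) \<in> edom (ext_fun A W) \<and> t \<in> C \<and> x \<in> frontier A \<longrightarrow>
         (\<forall>pt px. (pt, px) \<in> frechet_subdiff (ext_fun A W) (t, x) \<longrightarrow>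
             - pt + H t x (- px) \<ge> 0) \<and>
         (\<forall>pt px. ((pt, px), 0) \<in> normal_cone (epi (ext_fun A W)) ((t, x), real_of_ereal (W (t, x))) \<longrightarrow>
             ereal (- pt) + (SUP v\<in>dom_conj H t x. ereal (v \<bullet> (- px))) \<ge> 0)) \<and>
      (\<forall>t x. (t, x) \<in> edom (ext_fun A W) \<and> t \<in> C \<and> x \<in> interior A \<longrightarrow>
         (\<forall>pt px. (pt, px) \<in> frechet_subdiff (ext_fun A W) (t, x) \<longrightarrow>
             - pt + H t x (- px) = 0) \<and>
         (\<forall>pt px. ((pt, px), 0) \<in> normal_cone (epi (ext_fun A W)) ((t, x), real_of_ereal (W (t, x))) \<longrightarrow>
             ereal (- pt) + (SUP v\<in>dom_conj H t x. ereal (v \<bullet> (- px))) = 0)))"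

definition weak_sol_II :: "'a::euclidean_space set \<Rightarrow> (real \<Rightarrow> 'b set) \<Rightarrow> (real \<Rightarrow> 'a \<Rightarrow> 'b \<Rightarrow> 'a)
    \<Rightarrow> (real \<Rightarrow> 'a \<Rightarrow> 'b \<Rightarrow> real) \<Rightarrow> (real \<times> 'a \<Rightarrow> ereal) \<Rightarrow> bool" where
  "weak_sol_II A U f l W \<longleftrightarrow> lsc_on ({0..} \<times> A) W \<and>
    (\<exists>C. full_measure_pos C \<and>
      (\<forall>t x. (t, x) \<in> edom (ext_fun A W) \<and> t \<in> C \<and> x \<in> frontier A \<longrightarrow>
         (\<forall>pt px q. ((pt, px), q) \<in> normal_cone (epi (ext_fun A W)) ((t, x), real_of_ereal (W (t, x))) \<longrightarrow>
             ereal (- pt) + Hbar U f l t x (- px) (- q) \<ge> 0)) \<and>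
      (\<forall>t x. (t, x) \<in> edom (ext_fun A W) \<and> t \<in> C \<and> x \<in> interior A \<longrightarrow>
         (\<forall>pt px q. ((pt, px), q) \<in> normal_cone (epi (ext_fun A W)) ((t, x), real_of_ereal (W (t, x))) \<longrightarrow>
             ereal (- pt) + Hbar U f l t x (- px) (- q) = 0)))"

definition Lloc1_nonneg :: "(real \<Rightarrow> real) \<Rightarrow> bool" where
  "Lloc1_nonneg c \<longleftrightarrow> (\<forall>t\<ge>0. 0 \<le> c t) \<and> (\<forall>T. set_integrable lebesgue {0..T} c)"

definition scrL_loc :: "(real \<Rightarrow> real) \<Rightarrow> bool" where
  "scrL_loc k \<longleftrightarrow> Lloc1_nonneg k \<and>
     (\<forall>\<epsilon>>0. \<exists>\<sigma>>0. \<forall>a b. 0 \<le> a \<and> a \<le> b \<and> b - a \<le> \<sigma> \<longrightarrow> (LINT t:{a..b}|lebesgue. k t) \<le> \<epsilon>)"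

text \<open>Hausdorff distance (extended-real valued, so also meaningful for unbounded sets).\<close>
definition hausdorff_dist :: "'a::metric_space set \<Rightarrow> 'a set \<Rightarrow> ereal" where
  "hausdorff_dist S T = max (SUP a\<in>S. ereal (infdist a T)) (SUP b\<in>T. ereal (infdist b S))"

definition measurable_multifun :: "(real \<Rightarrow> 'b::topological_space set) \<Rightarrow> bool" where
  "measurable_multifun U \<longleftrightarrow> (\<forall>G. open G \<longrightarrow> {t\<in>{0..}. U t \<inter> G \<noteq> {}} \<in> sets lebesgue)"

definition cond_h :: "'a::euclidean_space set \<Rightarrow> (real \<Rightarrow> 'b::euclidean_space set)
    \<Rightarrow> (real \<Rightarrow> 'a \<Rightarrow> 'b \<Rightarrow> 'a) \<Rightarrow> (real \<Rightarrow> 'a \<Rightarrow> 'b \<Rightarrow> real) \<Rightarrow> bool" where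
  "cond_h A U f l \<longleftrightarrow>
    measurable_multifun U \<and> (\<forall>t\<ge>0. U t \<noteq> {} \<and> closed (U t)) \<and>
    \<comment> \<open>(h1)\<close>
    (\<forall>x u. set_borel_measurable lebesgue {0..} (\<lambda>t. f t x u)) \<and>
    (\<forall>x u. set_borel_measurable lebesgue {0..} (\<lambda>t. l t x u)) \<and>
    (\<forall>t\<ge>0. continuous_on UNIV (\<lambda>(x, u). f t x u) \<and> continuous_on UNIV (\<lambda>(x, u). l t x u)) \<and>
    (\<exists>\<phi>. set_integrable lebesgue {0..} \<phi> \<and> (\<forall>t\<ge>0. \<forall>x u. \<phi> t \<le> l t x u)) \<and>
    \<comment> \<open>(h2)\<close>
    (\<exists>c. Lloc1_nonneg c \<and>
       (\<forall>t\<ge>0. \<forall>x. \<forall>u\<in>U t. norm (f t x u) + \<bar>l t x u\<bar> \<le> c t * (1 + norm x))) \<and>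
    \<comment> \<open>(h3)\<close>
    (\<forall>t\<ge>0. \<forall>x. closed ((\<lambda>u. (f t x u, l t x u)) ` U t)) \<and>
    (\<forall>t\<ge>0. \<forall>x. \<forall>\<epsilon>>0. \<exists>\<delta>>0. \<forall>y. dist y x < \<delta> \<longrightarrow>
        hausdorff_dist ((\<lambda>u. (f t x u, l t x u)) ` U t) ((\<lambda>u. (f t y u, l t y u)) ` U t) < ereal \<epsilon>) \<and>
    \<comment> \<open>(h4)\<close>
    (\<forall>t\<ge>0. \<forall>x. convex {(f t x u, l t x u + r) | u r. u \<in> U t \<and> 0 \<le> r}) \<and>
    \<comment> \<open>(h5)\<close>
    (\<exists>q. scrL_loc q \<and>
       (\<forall>t\<ge>0. \<forall>x\<in>frontier A. \<forall>u\<in>U t. norm (f t x u) + \<bar>l t x u\<bar> \<le> q t)) \<and>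
    \<comment> \<open>(h6)\<close>
    (\<exists>k. scrL_loc k \<and>
       (\<forall>t\<ge>0. \<forall>x y. \<forall>u\<in>U t.
          norm (f t x u - f t y u) + \<bar>l t x u - l t y u\<bar> \<le> k t * norm (x - y)))"

end

theory Submission
  imports Defs
begin

lemma infdist_ltE:
  assumes "A \<noteq> {}" "infdist x A < e"
  obtains a where "a \<in> A" "dist x a < e"
proof -
  have "(INF a\<in>A. dist x a) < e" using assms by (simp add: infdist_def)
  then show ?thesis using that using cInf_lessD[of "dist x ` A" e] assms(1) by auto
qed

lemma subdiff_key:
  fixes \<phi> :: "'v::euclidean_space \<Rightarrow> ereal"
  assumes phiz: "\<phi> z = ereal a" and p: "p \<in> frechet_subdiff \<phi> z"
    and tg: "(\<zeta>, \<eta>) \<in> tangent_cone (epi \<phi>) (z, a)"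
    and e: "0 < \<epsilon>" "\<epsilon> \<le> 1"
  shows "\<eta> > \<zeta> \<bullet> p - \<epsilon> * (2 + norm p + norm \<zeta>)"
proof -
  define g where "g = (\<lambda>y. (\<phi> y - \<phi> z - ereal (p \<bullet> (y - z))) / ereal (norm (y - z)))"
  have "0 \<le> Liminf (at z) g" using p unfolding frechet_subdiff_def g_def by simp
  hence "eventually (\<lambda>y. ereal (-\<epsilon>) < g y) (at z)"
    using e by (simp add: le_Liminf_iff)
  then obtain \<delta> where d: "\<delta> > 0" and hd: "\<And>y. y \<noteq> z \<Longrightarrow> dist y z < \<delta> \<Longrightarrow> ereal (-\<epsilon>) < g y"
    unfolding eventually_at by blast
  define R where "R = (\<lambda>\<tau>::real. ereal (infdist ((z, a) + \<tau> *\<^sub>R (\<zeta>, \<eta>)) (epi \<phi>) / \<tau>))"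
  have L0: "Liminf (at_right 0) R = 0" using tg unfolding tangent_cone_def R_def by simp
  have ne: "\<not> eventually (\<lambda>\<tau>. ereal \<epsilon> \<le> R \<tau>) (at_right 0)"
  proof
    assume ev: "eventually (\<lambda>\<tau>. ereal \<epsilon> \<le> R \<tau>) (at_right 0)"
    have "ereal \<epsilon> \<le> Liminf (at_right 0) R"
      unfolding le_Liminf_iff
      using ev by (auto elim: eventually_mono)
    then show False using L0 e by simp
  qed
  define b where "b = \<delta> / (norm \<zeta> + 1)"
  have nz1: "norm \<zeta> + 1 > 0" by (smt (verit) norm_ge_zero)
  have b: "b > 0" using d nz1 unfolding b_def by (rule divide_pos_pos)
  obtain \<tau> where t: "0 < \<tau>" "\<tau> < b" "\<not> ereal \<epsilon> \<le> R \<tau>"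
    using ne b unfolding eventually_at_right_field by force
  have "infdist ((z, a) + \<tau> *\<^sub>R (\<zeta>, \<eta>)) (epi \<phi>) / \<tau> < \<epsilon>" using t(3) by (simp add: R_def)
  hence "infdist ((z, a) + \<tau> *\<^sub>R (\<zeta>, \<eta>)) (epi \<phi>) < \<epsilon> * \<tau>" using t(1)
    by (simp add: divide_less_eq)
  moreover have "epi \<phi> \<noteq> {}" using phiz unfolding epi_def by (metis (mono_tags, lifting) case_prod_conv empty_iff mem_Collect_eq order_refl)
  ultimately obtain w where w: "w \<in> epi \<phi>" "dist ((z, a) + \<tau> *\<^sub>R (\<zeta>, \<eta>)) w < \<epsilon> * \<tau>"
    using infdist_ltE by blast
  obtain y r where wyr: "w = (y, r)" by force
  have phy: "\<phi> y \<le> ereal r" using w(1) wyr by (simp add: epi_def)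
  have d1: "norm (z + \<tau> *\<^sub>R \<zeta> - y) < \<epsilon> * \<tau>"
    using dist_fst_le[of "(z, a) + \<tau> *\<^sub>R (\<zeta>, \<eta>)" w] w(2) wyr by (simp add: dist_norm)
  have d2: "\<bar>a + \<tau> * \<eta> - r\<bar> < \<epsilon> * \<tau>"
    using dist_snd_le[of "(z, a) + \<tau> *\<^sub>R (\<zeta>, \<eta>)" w] w(2) wyr by (simp add: dist_real_def)
  have ny: "norm (y - z) \<le> \<epsilon> * \<tau> + \<tau> * norm \<zeta>"
  proof -
    have "y - z = (y - (z + \<tau> *\<^sub>R \<zeta>)) + \<tau> *\<^sub>R \<zeta>" by simp
    hence "norm (y - z) \<le> norm (y - (z + \<tau> *\<^sub>R \<zeta>)) + norm (\<tau> *\<^sub>R \<zeta>)"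
      by (metis norm_triangle_ineq)
    also have "norm (y - (z + \<tau> *\<^sub>R \<zeta>)) = norm (z + \<tau> *\<^sub>R \<zeta> - y)" by (simp add: norm_minus_commute)
    finally show ?thesis using d1 t(1) by simp
  qed
  have ps: "\<bar>p \<bullet> (y - z - \<tau> *\<^sub>R \<zeta>)\<bar> \<le> norm p * (\<epsilon> * \<tau>)"
  proof -
    have "\<bar>p \<bullet> (y - z - \<tau> *\<^sub>R \<zeta>)\<bar> \<le> norm p * norm (y - z - \<tau> *\<^sub>R \<zeta>)"
      by (rule Cauchy_Schwarz_ineq2)
    also have "norm (y - z - \<tau> *\<^sub>R \<zeta>) = norm (z + \<tau> *\<^sub>R \<zeta> - y)"
      by (metis minus_diff_eq norm_minus_cancel diff_diff_eq)
    finally show ?thesis using d1 by (meson less_imp_le mult_left_mono norm_ge_zero order_trans)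
  qed
  have pyz: "p \<bullet> (y - z) = \<tau> * (\<zeta> \<bullet> p) + p \<bullet> (y - z - \<tau> *\<^sub>R \<zeta>)"
    by (simp add: inner_diff_right inner_commute)
  have npz: "0 \<le> norm p * norm \<zeta>" by simp
  show ?thesis
  proof (cases "y = z")
    case True
    have "a \<le> r" using phy phiz True by simp
    have nz: "\<tau> * norm \<zeta> < \<epsilon> * \<tau>" using d1 True t(1) by simp
    hence "norm \<zeta> < \<epsilon>" using t(1) by (simp add: mult.commute)
    hence "\<zeta> \<bullet> p \<le> \<epsilon> * norm p"
      by (metis Cauchy_Schwarz_ineq2 abs_le_D1 inner_commute less_imp_le mult.commute mult_left_mono norm_ge_zero order_trans)
    moreover have "\<tau> * \<eta> > - (\<epsilon> * \<tau>)" using d2 \<open>a \<le> r\<close> by linarith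
    hence "\<eta> > - \<epsilon>" using t(1) by (smt (verit) mult.commute mult_less_cancel_left_pos mult_minus_left)
    moreover have "0 \<le> \<epsilon> * norm \<zeta>" using e by simp
    moreover have "\<epsilon> * (2 + norm p + norm \<zeta>) = 2*\<epsilon> + \<epsilon> * norm p + \<epsilon> * norm \<zeta>"
      by (simp add: algebra_simps)
    ultimately show ?thesis using e by linarith
  next
    case False
    have "norm (y - z) < \<delta>"
    proof -
      have "\<epsilon> * \<tau> + \<tau> * norm \<zeta> \<le> \<tau> * (norm \<zeta> + 1)" using e t(1) by (simp add: algebra_simps)
      also have "\<dots> < b * (norm \<zeta> + 1)" using t(2) nz1 by (rule mult_strict_right_mono)
      also have "\<dots> = \<delta>" unfolding b_def using nz1 by simp
      finally show ?thesis using ny by linarith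
    qed
    hence gy: "ereal (-\<epsilon>) < g y" using hd[of y] False by (simp add: dist_norm)
    have nyz: "norm (y - z) > 0" using False by simp
    obtain c where phc: "\<phi> y = ereal c"
    proof (cases "\<phi> y")
      case (real c) then show ?thesis using that by simp
    next
      case PInf then show ?thesis using phy by simp
    next
      case MInf then have "g y = - \<infinity>" unfolding g_def using phiz nyz by simp
      then show ?thesis using gy by simp
    qed
    have "g y = ereal ((c - a - p \<bullet> (y - z)) / norm (y - z))"
      unfolding g_def using phc phiz nyz by (simp add: ereal_divide)
    hence "-\<epsilon> < (c - a - p \<bullet> (y - z)) / norm (y - z)" using gy by simp
    hence c1: "- \<epsilon> * norm (y - z) < c - a - p \<bullet> (y - z)" using nyz by (simp add: less_divide_eq)
    have c2: "c \<le> r" using phy phc by simp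
    have c3: "\<epsilon> * norm (y - z) \<le> \<epsilon> * (\<epsilon> * \<tau> + \<tau> * norm \<zeta>)" using ny e by simp
    have c3': "\<epsilon> * norm (y - z) \<le> \<epsilon> * (\<epsilon> * \<tau>) + \<epsilon> * (\<tau> * norm \<zeta>)"
      using c3 by (simp add: distrib_left)
    have c4: "\<epsilon> * (\<epsilon> * \<tau>) \<le> \<epsilon> * \<tau>" using e t(1) by (simp add: mult_le_cancel_right1)
    have "\<tau> * \<eta> + \<epsilon> * \<tau> > \<tau> * (\<zeta> \<bullet> p) - norm p * (\<epsilon> * \<tau>) - \<epsilon> * \<tau> - \<epsilon> * (\<tau> * norm \<zeta>)"
      using c1 c2 c3' c4 d2 ps pyz by linarith
    moreover have "\<tau> * (\<zeta> \<bullet> p - \<epsilon> * (2 + norm p + norm \<zeta>)) = \<tau> * (\<zeta> \<bullet> p) - 2 * (\<epsilon> * \<tau>) - norm p * (\<epsilon> * \<tau>) - \<epsilon> * (\<tau> * norm \<zeta>)"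
      by (simp add: algebra_simps)
    ultimately have "\<tau> * \<eta> > \<tau> * (\<zeta> \<bullet> p - \<epsilon> * (2 + norm p + norm \<zeta>))" by linarith
    thus ?thesis using t(1) by simp
  qed
qed

lemma subdiff_imp_normal:
  fixes \<phi> :: "'v::euclidean_space \<Rightarrow> ereal"
  assumes phiz: "\<phi> z = ereal a" and p: "p \<in> frechet_subdiff \<phi> z"
  shows "(p, -1) \<in> normal_cone (epi \<phi>) (z, a)"
  unfolding normal_cone_def
proof (clarify)
  fix \<zeta> \<eta> assume tg: "(\<zeta>, \<eta>) \<in> tangent_cone (epi \<phi>) (z, a)"
  define K where "K = 2 + norm p + norm \<zeta>"
  have K: "K > 0" unfolding K_def by (smt (verit) norm_ge_zero)
  show "(\<zeta>, \<eta>) \<bullet> (p, -1) \<le> 0"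
  proof (rule ccontr)
    assume "\<not> ?thesis"
    hence D: "\<zeta> \<bullet> p - \<eta> > 0" by (simp add: inner_Pair)
    define \<epsilon> where "\<epsilon> = min 1 ((\<zeta> \<bullet> p - \<eta>) / (2 * K))"
    have e: "0 < \<epsilon>" "\<epsilon> \<le> 1" using D K by (auto simp: \<epsilon>_def)
    have "\<eta> > \<zeta> \<bullet> p - \<epsilon> * K" using subdiff_key[OF phiz p tg e] by (simp add: K_def)
    moreover have "\<epsilon> * K \<le> (\<zeta> \<bullet> p - \<eta>) / 2"
    proof -
      have "\<epsilon> * K \<le> ((\<zeta> \<bullet> p - \<eta>) / (2 * K)) * K"
        using K by (intro mult_right_mono) (auto simp: \<epsilon>_def)
      also have "\<dots> = (\<zeta> \<bullet> p - \<eta>) / 2" using K by simp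
      finally show ?thesis .
    qed
    ultimately show False using D by (simp add: field_simps)
  qed
qed

lemma normal_q_nonpos:
  fixes \<phi> :: "'v::euclidean_space \<Rightarrow> ereal"
  assumes phiz: "\<phi> z = ereal a" and n: "(w, q) \<in> normal_cone (epi \<phi>) (z, a)"
  shows "q \<le> 0"
proof -
  have "(0, 1) \<in> tangent_cone (epi \<phi>) (z, a)"
  proof -
    have "eventually (\<lambda>\<tau>. ereal (infdist ((z, a) + \<tau> *\<^sub>R (0, 1)) (epi \<phi>) / \<tau>) = 0) (at_right (0::real))"
      unfolding eventually_at_right_field
    proof (intro exI[of _ 1] conjI allI impI)
      fix \<tau> :: real assume "0 < \<tau>" "\<tau> < 1"
      hence "(z, a + \<tau>) \<in> epi \<phi>" using phiz by (simp add: epi_def)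
      hence "infdist ((z, a) + \<tau> *\<^sub>R (0, 1)) (epi \<phi>) = 0" by (simp add: infdist_zero)
      thus "ereal (infdist ((z, a) + \<tau> *\<^sub>R (0, 1)) (epi \<phi>) / \<tau>) = 0" by simp
    qed simp
    hence "Liminf (at_right (0::real)) (\<lambda>\<tau>. ereal (infdist ((z, a) + \<tau> *\<^sub>R (0, 1)) (epi \<phi>) / \<tau>)) = Liminf (at_right (0::real)) (\<lambda>_. 0::ereal)"
      by (rule Liminf_eq)
    also have "\<dots> = 0" by (simp add: Liminf_const)
    finally show ?thesis unfolding tangent_cone_def by simp
  qed
  with n show ?thesis unfolding normal_cone_def by (force simp: inner_Pair)
qed

lemma normal_scale:
  assumes "\<xi> \<in> normal_cone C z" "c > 0"
  shows "c *\<^sub>R \<xi> \<in> normal_cone C z"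
  using assms unfolding normal_cone_def by (auto simp: mult_nonneg_nonpos)

lemma normal_imp_subdiff:
  fixes \<phi> :: "'v::euclidean_space \<Rightarrow> ereal"
  assumes phiz: "\<phi> z = ereal a" and nm: "\<forall>y. \<phi> y \<noteq> -\<infinity>"
    and n: "(p, -1) \<in> normal_cone (epi \<phi>) (z, a)"
  shows "p \<in> frechet_subdiff \<phi> z"
proof (rule ccontr)
  define g where "g = (\<lambda>y. (\<phi> y - \<phi> z - ereal (p \<bullet> (y - z))) / ereal (norm (y - z)))"
  assume "p \<notin> frechet_subdiff \<phi> z"
  hence "\<not> 0 \<le> Liminf (at z) g" unfolding frechet_subdiff_def g_def by simp
  then obtain y0 where y0: "y0 < 0" "\<not> eventually (\<lambda>y. y0 < g y) (at z)"
    unfolding le_Liminf_iff by blast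
  obtain \<epsilon> where e: "\<epsilon> > 0" "y0 \<le> ereal (-\<epsilon>)"
  proof (cases y0)
    case (real r) then show ?thesis using that[of "-r"] y0 by simp
  next
    case PInf then show ?thesis using y0 by simp
  next
    case MInf then show ?thesis using that[of 1] by simp
  qed
  have ne: "\<not> eventually (\<lambda>y. ereal (-\<epsilon>) < g y) (at z)"
  proof
    assume "eventually (\<lambda>y. ereal (-\<epsilon>) < g y) (at z)"
    hence "eventually (\<lambda>y. y0 < g y) (at z)" by (rule eventually_mono) (use e(2) in \<open>rule le_less_trans\<close>)
    thus False using y0(2) by simp
  qed
  have ex: "\<exists>y. y \<noteq> z \<and> dist y z < 1 / Suc k \<and> \<not> ereal (-\<epsilon>) < g y" for k :: nat
    using ne unfolding eventually_at by (metis of_nat_0_less_iff zero_less_Suc zero_less_divide_1_iff)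
  define Y where "Y = (\<lambda>k::nat. SOME y. y \<noteq> z \<and> dist y z < 1 / Suc k \<and> \<not> ereal (-\<epsilon>) < g y)"
  have Y: "Y k \<noteq> z" "dist (Y k) z < 1 / Suc k" "\<not> ereal (-\<epsilon>) < g (Y k)" for k
    using someI_ex[OF ex[of k]] unfolding Y_def by auto
  define \<tau> where "\<tau> = (\<lambda>k. norm (Y k - z))"
  have tpos: "\<tau> k > 0" for k using Y(1) by (simp add: \<tau>_def)
  have tlt: "\<tau> k < 1 / Suc k" for k using Y(2) by (simp add: \<tau>_def dist_norm)
  have B: "\<exists>b. \<phi> (Y k) = ereal b \<and> b \<le> a + p \<bullet> (Y k - z) - \<epsilon> * \<tau> k" for k
  proof (cases "\<phi> (Y k)")
    case (real b)
    have "g (Y k) = ereal ((b - a - p \<bullet> (Y k - z)) / \<tau> k)"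
      unfolding g_def using real phiz tpos[of k] by (simp add: \<tau>_def ereal_divide)
    hence "(b - a - p \<bullet> (Y k - z)) / \<tau> k \<le> - \<epsilon>" using Y(3)[of k] by simp
    hence "b - a - p \<bullet> (Y k - z) \<le> - \<epsilon> * \<tau> k" using tpos[of k] by (simp add: divide_le_eq)
    then show ?thesis using real by (intro exI[of _ b]) (simp add: algebra_simps)
  next
    case PInf
    hence "g (Y k) = \<infinity>" unfolding g_def using phiz tpos[of k] by (simp add: \<tau>_def)
    then show ?thesis using Y(3)[of k] by simp
  next
    case MInf then show ?thesis using nm by simp
  qed
  define d where "d = (\<lambda>k. (1 / \<tau> k) *\<^sub>R (Y k - z))"
  have dS: "d k \<in> sphere 0 1" for k using tpos[of k] by (simp add: d_def \<tau>_def)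
  have Yd: "Y k - z = \<tau> k *\<^sub>R d k" for k using tpos[of k] by (simp add: d_def)
  obtain dd r where dd: "dd \<in> sphere 0 1" "strict_mono r" "(d \<circ> r) \<longlonglongrightarrow> dd"
  proof -
    have dS': "\<forall>n. d n \<in> sphere 0 1" using dS by blast
    show ?thesis using seq_compactE[OF compact_imp_seq_compact[OF compact_sphere[of "0::'v" 1]] dS'] that by blast
  qed
  have tg: "(dd, p \<bullet> dd - \<epsilon>) \<in> tangent_cone (epi \<phi>) (z, a)"
  proof -
    define R where "R = (\<lambda>t::real. ereal (infdist ((z, a) + t *\<^sub>R (dd, p \<bullet> dd - \<epsilon>)) (epi \<phi>) / t))"
    have ge: "0 \<le> Liminf (at_right 0) R"
      unfolding le_Liminf_iff
    proof (intro allI impI)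
      fix y :: ereal assume "y < 0"
      show "eventually (\<lambda>t. y < R t) (at_right 0)"
        unfolding eventually_at_right_field
      proof (intro exI[of _ 1] conjI allI impI)
        fix t :: real assume "0 < t" "t < 1"
        hence "0 \<le> R t" unfolding R_def by (simp add: infdist_nonneg)
        thus "y < R t" using \<open>y < 0\<close> by simp
      qed simp
    qed
    have le: "\<not> 0 < Liminf (at_right 0) R"
    proof
      assume "0 < Liminf (at_right 0) R"
      then obtain c where c: "0 < ereal c" "ereal c < Liminf (at_right 0) R"
        using ereal_dense2 by blast
      have "eventually (\<lambda>t. ereal c < R t) (at_right 0)" using c(2) by (rule less_LiminfD)
      then obtain b where b: "b > 0" "\<And>t. 0 < t \<Longrightarrow> t < b \<Longrightarrow> ereal c < R t"
        unfolding eventually_at_right_field by auto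
      define c' where "c' = c / (1 + norm p)"
      have np: "1 + norm p > 0" by (smt (verit) norm_ge_zero)
      have c'pos: "c' > 0" using c(1) np by (simp add: c'_def)
      have ev1: "eventually (\<lambda>k. dist ((d \<circ> r) k) dd < c') sequentially"
        using dd(3) c'pos by (rule tendstoD)
      obtain N1 where N1: "\<And>k. k \<ge> N1 \<Longrightarrow> dist ((d \<circ> r) k) dd < c'"
        using ev1 unfolding eventually_sequentially by blast
      obtain N2 :: nat where N2: "1 / b < N2" using reals_Archimedean2 by blast
      define k where "k = max N1 N2"
      define k' where "k' = r k"
      have "k \<le> k'" unfolding k'_def using dd(2) by (rule seq_suble)
      have "\<tau> k' < 1 / Suc k'" by (rule tlt)
      also have "\<dots> \<le> 1 / Suc k" using \<open>k \<le> k'\<close> by (simp add: frac_le)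
      also have "\<dots> < b"
      proof -
        have "1 / b < Suc k" using N2 unfolding k_def by linarith
        thus ?thesis using b(1) by (simp add: divide_less_eq mult.commute)
      qed
      finally have tb: "\<tau> k' < b" .
      have dk: "norm (d k' - dd) < c'" using N1[of k] unfolding k_def k'_def by (simp add: dist_norm)
      obtain bb where bb: "\<phi> (Y k') = ereal bb" "bb \<le> a + p \<bullet> (Y k' - z) - \<epsilon> * \<tau> k'"
        using B by blast
      define P where "P = (Y k', a + p \<bullet> (Y k' - z) - \<epsilon> * \<tau> k')"
      have Pe: "P \<in> epi \<phi>" using bb unfolding P_def epi_def by simp
      have eqP: "(z, a) + \<tau> k' *\<^sub>R (dd, p \<bullet> dd - \<epsilon>) - P = (\<tau> k' *\<^sub>R (dd - d k'), \<tau> k' * (p \<bullet> (dd - d k')))"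
        unfolding P_def using Yd[of k'] by (simp add: algebra_simps inner_diff_right)
      have "infdist ((z, a) + \<tau> k' *\<^sub>R (dd, p \<bullet> dd - \<epsilon>)) (epi \<phi>) \<le> dist ((z, a) + \<tau> k' *\<^sub>R (dd, p \<bullet> dd - \<epsilon>)) P"
        using Pe by (rule infdist_le)
      also have "\<dots> = norm (\<tau> k' *\<^sub>R (dd - d k'), \<tau> k' * (p \<bullet> (dd - d k')))"
        unfolding dist_norm eqP ..
      also have "\<dots> \<le> norm (\<tau> k' *\<^sub>R (dd - d k')) + norm (\<tau> k' * (p \<bullet> (dd - d k')))"
        by (rule norm_Pair_le)
      also have "\<dots> \<le> \<tau> k' * norm (dd - d k') + \<tau> k' * (norm p * norm (dd - d k'))"
        using tpos[of k'] Cauchy_Schwarz_ineq2[of p "dd - d k'"]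
        by (simp add: abs_mult mult_left_mono)
      also have "\<dots> = \<tau> k' * ((1 + norm p) * norm (d k' - dd))" by (simp add: algebra_simps norm_minus_commute)
      also have "\<dots> < \<tau> k' * ((1 + norm p) * c')"
        using tpos[of k'] np dk by simp
      also have "\<dots> = \<tau> k' * c" using np by (simp add: c'_def)
      finally have "infdist ((z, a) + \<tau> k' *\<^sub>R (dd, p \<bullet> dd - \<epsilon>)) (epi \<phi>) / \<tau> k' < c"
        using tpos[of k'] by (simp add: divide_less_eq mult.commute)
      hence "R (\<tau> k') < ereal c" by (simp add: R_def)
      with b(2)[OF tpos[of k'] tb] show False by simp
    qed
    from ge le have "Liminf (at_right 0) R = 0" using antisym not_less by blast
    thus ?thesis unfolding tangent_cone_def R_def by (simp only: mem_Collect_eq)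
  qed
  have "(dd, p \<bullet> dd - \<epsilon>) \<bullet> (p, -1) \<le> 0" using n tg unfolding normal_cone_def by blast
  thus False using e(1) by (simp add: inner_Pair inner_commute)
qed

lemma Hbar_scale:
  assumes Hrep: "\<forall>p. ereal (H t x p) = (SUP u\<in>U t. ereal (p \<bullet> f t x u - l t x u))"
    and ne: "U t \<noteq> {}" and s: "s > 0"
  shows "Hbar U f l t x w s = ereal (s * H t x ((1 / s) *\<^sub>R w))"
proof -
  have "Hbar U f l t x w s = (SUP u\<in>U t. ereal s * ereal (((1 / s) *\<^sub>R w) \<bullet> f t x u - l t x u))"
    unfolding Hbar_def
  proof (intro SUP_cong refl)
    fix u
    have "s * (((1 / s) *\<^sub>R w) \<bullet> f t x u - l t x u) = w \<bullet> f t x u - s * l t x u"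
      using s by (simp add: algebra_simps)
    thus "ereal (w \<bullet> f t x u - s * l t x u) = ereal s * ereal (((1 / s) *\<^sub>R w) \<bullet> f t x u - l t x u)"
      by simp
  qed
  also have "\<dots> = ereal s * (SUP u\<in>U t. ereal (((1 / s) *\<^sub>R w) \<bullet> f t x u - l t x u))"
    using Sup_ereal_mult_left'[OF ne, of s] s by simp
  also have "\<dots> = ereal s * ereal (H t x ((1 / s) *\<^sub>R w))" using Hrep by simp
  finally show ?thesis by simp
qed

lemma dom_sup:
  assumes Hrep: "\<forall>p. ereal (H t x p) = (SUP u\<in>U t. ereal (p \<bullet> f t x u - l t x u))"
    and ne: "U t \<noteq> {}" and bd: "\<forall>u\<in>U t. norm (f t x u) + \<bar>l t x u\<bar> \<le> K"
  shows "(SUP v\<in>dom_conj H t x. ereal (v \<bullet> p)) = (SUP u\<in>U t. ereal (p \<bullet> f t x u))"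
proof (rule antisym)
  have Hge: "H t x q \<ge> q \<bullet> f t x u - l t x u" if "u \<in> U t" for q u
  proof -
    have "ereal (q \<bullet> f t x u - l t x u) \<le> ereal (H t x q)" unfolding Hrep[rule_format] using that by (rule SUP_upper)
    thus ?thesis by simp
  qed
  show "(SUP u\<in>U t. ereal (p \<bullet> f t x u)) \<le> (SUP v\<in>dom_conj H t x. ereal (v \<bullet> p))"
  proof (rule SUP_least)
    fix u assume u: "u \<in> U t"
    have "conj_H H t x (f t x u) \<le> ereal (l t x u)"
      unfolding conj_H_def
    proof (rule SUP_least)
      fix q
      show "ereal (f t x u \<bullet> q - H t x q) \<le> ereal (l t x u)"
        using Hge[OF u, of q] by (simp add: inner_commute)
    qed
    hence "f t x u \<in> dom_conj H t x" unfolding dom_conj_def using le_less_trans[of _ "ereal (l t x u)" \<infinity>] by auto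
    hence "ereal (f t x u \<bullet> p) \<le> (SUP v\<in>dom_conj H t x. ereal (v \<bullet> p))" by (rule SUP_upper)
    thus "ereal (p \<bullet> f t x u) \<le> (SUP v\<in>dom_conj H t x. ereal (v \<bullet> p))" by (simp add: inner_commute)
  qed
  show "(SUP v\<in>dom_conj H t x. ereal (v \<bullet> p)) \<le> (SUP u\<in>U t. ereal (p \<bullet> f t x u))"
  proof (rule SUP_least)
    fix v assume v: "v \<in> dom_conj H t x"
    define M where "M = (SUP u\<in>U t. ereal (p \<bullet> f t x u))"
    show "ereal (v \<bullet> p) \<le> M"
    proof (rule ccontr)
      assume "\<not> ereal (v \<bullet> p) \<le> M"
      hence Mlt: "M < ereal (v \<bullet> p)" by simp
      obtain u0 where u0: "u0 \<in> U t" using ne by blast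
      have "ereal (p \<bullet> f t x u0) \<le> M" unfolding M_def using u0 by (rule SUP_upper)
      then obtain m where m: "M = ereal m" using Mlt
        by (cases M) auto
      have pm: "p \<bullet> f t x u \<le> m" if "u \<in> U t" for u
      proof -
        have "ereal (p \<bullet> f t x u) \<le> M" unfolding M_def using that by (rule SUP_upper)
        thus ?thesis using m by simp
      qed
      define \<delta> where "\<delta> = v \<bullet> p - m"
      have dpos: "\<delta> > 0" using Mlt m by (simp add: \<delta>_def)
      have Hs: "H t x (s *\<^sub>R p) \<le> s * m + K" if "s \<ge> 0" for s
      proof -
        have "ereal (H t x (s *\<^sub>R p)) \<le> ereal (s * m + K)"
          unfolding Hrep[rule_format]
        proof (rule SUP_least)
          fix u assume u: "u \<in> U t"
          have "(s *\<^sub>R p) \<bullet> f t x u = s * (p \<bullet> f t x u)" by simp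
          also have "\<dots> \<le> s * m" using pm[OF u] that by (simp add: mult_left_mono)
          finally have a: "(s *\<^sub>R p) \<bullet> f t x u \<le> s * m" .
          have b: "- l t x u \<le> K" using bd u by (smt (verit) norm_ge_zero)
          show "ereal ((s *\<^sub>R p) \<bullet> f t x u - l t x u) \<le> ereal (s * m + K)"
            using a b by simp
        qed
        thus ?thesis by simp
      qed
      have cge: "ereal (s * \<delta> - K) \<le> conj_H H t x v" if "s \<ge> 0" for s
      proof -
        have "ereal (v \<bullet> (s *\<^sub>R p) - H t x (s *\<^sub>R p)) \<le> conj_H H t x v"
          unfolding conj_H_def by (rule SUP_upper) simp
        moreover have "s * \<delta> - K \<le> v \<bullet> (s *\<^sub>R p) - H t x (s *\<^sub>R p)"
          using Hs[OF that] by (simp add: \<delta>_def algebra_simps)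
        ultimately show ?thesis by (meson ereal_less_eq(3) order_trans)
      qed
      have "conj_H H t x v < \<infinity>" using v unfolding dom_conj_def by simp
      moreover have "conj_H H t x v > -\<infinity>" using cge[of 0] by auto
      ultimately obtain B where B: "conj_H H t x v = ereal B" by (cases "conj_H H t x v") auto
      define s where "s = (\<bar>B\<bar> + \<bar>K\<bar> + 1) / \<delta>"
      have s0: "s \<ge> 0" unfolding s_def using dpos by simp
      have "s * \<delta> = \<bar>B\<bar> + \<bar>K\<bar> + 1" unfolding s_def using dpos by simp
      moreover have "s * \<delta> - K \<le> B" using cge[OF s0] B by simp
      ultimately show False by linarith
    qed
  qed
qed

lemma point_equiv:
  fixes \<phi> :: "real \<times> 'a::euclidean_space \<Rightarrow> ereal" and P :: "ereal \<Rightarrow> bool"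
    and H :: "real \<Rightarrow> 'a \<Rightarrow> 'a \<Rightarrow> real"
  assumes phiz: "\<phi> (t, x) = ereal a" and nm: "\<forall>y. \<phi> y \<noteq> -\<infinity>"
    and Hrep: "\<forall>p. ereal (H t x p) = (SUP u\<in>U t. ereal (p \<bullet> f t x u - l t x u))"
    and ne: "U t \<noteq> {}" and bd: "\<forall>u\<in>U t. norm (f t x u) + \<bar>l t x u\<bar> \<le> K"
    and hom: "\<And>s r. s > 0 \<Longrightarrow> P (ereal (s * r)) \<longleftrightarrow> P (ereal r)"
  shows "((\<forall>pt px. (pt, px) \<in> frechet_subdiff \<phi> (t, x) \<longrightarrow> P (ereal (- pt + H t x (- px)))) \<and>
          (\<forall>pt px. ((pt, px), 0) \<in> normal_cone (epi \<phi>) ((t, x), a) \<longrightarrow>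
             P (ereal (- pt) + (SUP v\<in>dom_conj H t x. ereal (v \<bullet> (- px))))))
     \<longleftrightarrow> (\<forall>pt px q. ((pt, px), q) \<in> normal_cone (epi \<phi>) ((t, x), a) \<longrightarrow>
             P (ereal (- pt) + Hbar U f l t x (- px) (- q)))"
proof -
  have H0: "Hbar U f l t x w 0 = (SUP v\<in>dom_conj H t x. ereal (v \<bullet> w))" for w
    unfolding Hbar_def using dom_sup[where H=H and t=t and x=x and U=U and f=f and l=l and K=K and p=w, OF Hrep ne bd] by simp
  show ?thesis
  proof (intro iffI allI impI conjI)
    fix pt px q
    assume I: "(\<forall>pt px. (pt, px) \<in> frechet_subdiff \<phi> (t, x) \<longrightarrow> P (ereal (- pt + H t x (- px)))) \<and>
          (\<forall>pt px. ((pt, px), 0) \<in> normal_cone (epi \<phi>) ((t, x), a) \<longrightarrow>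
             P (ereal (- pt) + (SUP v\<in>dom_conj H t x. ereal (v \<bullet> (- px)))))"
      and n: "((pt, px), q) \<in> normal_cone (epi \<phi>) ((t, x), a)"
    have "q \<le> 0" using normal_q_nonpos[where \<phi>=\<phi> and z="(t,x)", OF phiz n] .
    show "P (ereal (- pt) + Hbar U f l t x (- px) (- q))"
    proof (cases "q = 0")
      case True
      then show ?thesis using I n H0[of "-px"] by simp
    next
      case False
      define s where "s = - q"
      have s: "s > 0" using False \<open>q \<le> 0\<close> by (simp add: s_def)
      have "(1 / s) *\<^sub>R ((pt, px), q) \<in> normal_cone (epi \<phi>) ((t, x), a)"
        using normal_scale[OF n, of "1/s"] s by simp
      hence "((pt / s, (1 / s) *\<^sub>R px), -1) \<in> normal_cone (epi \<phi>) ((t, x), a)"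
        using s by (simp add: s_def)
      hence "(pt / s, (1 / s) *\<^sub>R px) \<in> frechet_subdiff \<phi> (t, x)"
        by (rule normal_imp_subdiff[where \<phi>=\<phi> and z="(t,x)", OF phiz nm])
      hence "P (ereal (- (pt / s) + H t x (- ((1 / s) *\<^sub>R px))))" using I by blast
      hence "P (ereal (s * (- (pt / s) + H t x (- ((1 / s) *\<^sub>R px)))))" using hom[OF s] by simp
      moreover have "ereal (- pt) + Hbar U f l t x (- px) (- q) = ereal (s * (- (pt / s) + H t x (- ((1 / s) *\<^sub>R px))))"
        using Hbar_scale[where H=H and t=t and x=x and U=U and f=f and l=l and s=s and w="-px", OF Hrep ne s] s by (simp add: s_def algebra_simps)
      ultimately show ?thesis by simp
    qed
  next
    fix pt px
    assume II: "\<forall>pt px q. ((pt, px), q) \<in> normal_cone (epi \<phi>) ((t, x), a) \<longrightarrow>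
             P (ereal (- pt) + Hbar U f l t x (- px) (- q))"
    {
      assume "(pt, px) \<in> frechet_subdiff \<phi> (t, x)"
      hence "((pt, px), -1) \<in> normal_cone (epi \<phi>) ((t, x), a)"
        by (rule subdiff_imp_normal[where \<phi>=\<phi> and z="(t,x)", OF phiz])
      hence "P (ereal (- pt) + Hbar U f l t x (- px) 1)" using II by force
      moreover have "Hbar U f l t x (- px) 1 = ereal (H t x (- px))"
        using Hbar_scale[where H=H and t=t and x=x and U=U and f=f and l=l and s=1 and w="-px", OF Hrep ne] by simp
      ultimately show "P (ereal (- pt + H t x (- px)))" by simp
    }
    {
      assume "((pt, px), 0) \<in> normal_cone (epi \<phi>) ((t, x), a)"
      hence "P (ereal (- pt) + Hbar U f l t x (- px) (- 0))" using II by blast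
      thus "P (ereal (- pt) + (SUP v\<in>dom_conj H t x. ereal (v \<bullet> (- px))))" using H0[of "-px"] by simp
    }
  qed
qed

theorem proposition4p3:
  fixes A :: "'a::euclidean_space set"
    and H :: "real \<Rightarrow> 'a \<Rightarrow> 'a \<Rightarrow> real"
    and U :: "real \<Rightarrow> 'b::euclidean_space set"
    and f :: "real \<Rightarrow> 'a \<Rightarrow> 'b \<Rightarrow> 'a"
    and l :: "real \<Rightarrow> 'a \<Rightarrow> 'b \<Rightarrow> real"
    and W :: "real \<times> 'a \<Rightarrow> ereal"
  assumes "A \<noteq> {}" and "closed A"
    and "cond_h A U f l"
    and "\<forall>t\<ge>0. \<forall>x p. ereal (H t x p) = (SUP u\<in>U t. ereal (p \<bullet> f t x u - l t x u))"
    and "\<forall>t\<ge>0. \<forall>x\<in>A. W (t, x) \<noteq> - \<infinity>"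
  shows "weak_sol_I A H W \<longleftrightarrow> weak_sol_II A U f l W"
proof -
  define \<phi> where "\<phi> = ext_fun A W"
  have h01: "\<forall>t\<ge>0. U t \<noteq> {} \<and> closed (U t)"
    using assms(3) unfolding cond_h_def by (elim conjE) assumption
  have h2: "\<exists>c. Lloc1_nonneg c \<and>
       (\<forall>t\<ge>0. \<forall>x. \<forall>u\<in>U t. norm (f t x u) + \<bar>l t x u\<bar> \<le> c t * (1 + norm x))"
    using assms(3) unfolding cond_h_def by (elim conjE) assumption
  have Une: "\<And>t. t \<ge> 0 \<Longrightarrow> U t \<noteq> {}" using h01 by simp
  obtain c where cb: "\<And>t x u. t \<ge> 0 \<Longrightarrow> u \<in> U t \<Longrightarrow> norm (f t x u) + \<bar>l t x u\<bar> \<le> c t * (1 + norm x)"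
    using h2 by blast
  have nm: "\<forall>y. \<phi> y \<noteq> -\<infinity>" using assms(5) unfolding \<phi>_def ext_fun_def by auto
  have key: "((\<forall>pt px. (pt, px) \<in> frechet_subdiff \<phi> (t, x) \<longrightarrow> P (ereal (- pt + H t x (- px)))) \<and>
          (\<forall>pt px. ((pt, px), 0) \<in> normal_cone (epi \<phi>) ((t, x), real_of_ereal (W (t, x))) \<longrightarrow>
             P (ereal (- pt) + (SUP v\<in>dom_conj H t x. ereal (v \<bullet> (- px))))))
     \<longleftrightarrow> (\<forall>pt px q. ((pt, px), q) \<in> normal_cone (epi \<phi>) ((t, x), real_of_ereal (W (t, x))) \<longrightarrow>
             P (ereal (- pt) + Hbar U f l t x (- px) (- q)))"
    if t: "t > 0" and x: "x \<in> A" and dm: "(t, x) \<in> edom \<phi>"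
      and hom: "\<And>s r. s > 0 \<Longrightarrow> P (ereal (s * r)) \<longleftrightarrow> P (ereal r)" for t x P
  proof -
    have "\<phi> (t, x) = W (t, x)" using t x by (simp add: \<phi>_def ext_fun_def)
    moreover have "W (t, x) < \<infinity>" using dm \<open>\<phi> (t, x) = W (t, x)\<close> by (simp add: edom_def)
    moreover have "W (t, x) \<noteq> -\<infinity>" using assms(5) t x by simp
    ultimately have phiz: "\<phi> (t, x) = ereal (real_of_ereal (W (t, x)))"
      by (cases "W (t, x)") auto
    have Hrep: "\<forall>p. ereal (H t x p) = (SUP u\<in>U t. ereal (p \<bullet> f t x u - l t x u))"
      using assms(4) t by simp
    have bd: "\<forall>u\<in>U t. norm (f t x u) + \<bar>l t x u\<bar> \<le> c t * (1 + norm x)" using cb t by simp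
    have ne: "U t \<noteq> {}" using Une t by simp
    show ?thesis
      by (rule point_equiv[where \<phi>=\<phi> and P=P and t=t and x=x and H=H and U=U and f=f and l=l and K="c t * (1 + norm x)" and a="real_of_ereal (W (t, x))", OF phiz nm Hrep ne bd hom])
  qed
  have frA: "frontier A \<subseteq> A" using assms(2) by (simp add: frontier_subset_closed)
  have inA: "interior A \<subseteq> A" by (rule interior_subset)
  have blocks: "full_measure_pos C \<Longrightarrow>
     ((\<forall>t x. (t, x) \<in> edom (ext_fun A W) \<and> t \<in> C \<and> x \<in> frontier A \<longrightarrow>
         (\<forall>pt px. (pt, px) \<in> frechet_subdiff (ext_fun A W) (t, x) \<longrightarrow>
             - pt + H t x (- px) \<ge> 0) \<and>
         (\<forall>pt px. ((pt, px), 0) \<in> normal_cone (epi (ext_fun A W)) ((t, x), real_of_ereal (W (t, x))) \<longrightarrow>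
             ereal (- pt) + (SUP v\<in>dom_conj H t x. ereal (v \<bullet> (- px))) \<ge> 0)) \<and>
      (\<forall>t x. (t, x) \<in> edom (ext_fun A W) \<and> t \<in> C \<and> x \<in> interior A \<longrightarrow>
         (\<forall>pt px. (pt, px) \<in> frechet_subdiff (ext_fun A W) (t, x) \<longrightarrow>
             - pt + H t x (- px) = 0) \<and>
         (\<forall>pt px. ((pt, px), 0) \<in> normal_cone (epi (ext_fun A W)) ((t, x), real_of_ereal (W (t, x))) \<longrightarrow>
             ereal (- pt) + (SUP v\<in>dom_conj H t x. ereal (v \<bullet> (- px))) = 0)))
   \<longleftrightarrow>
     ((\<forall>t x. (t, x) \<in> edom (ext_fun A W) \<and> t \<in> C \<and> x \<in> frontier A \<longrightarrow>
         (\<forall>pt px q. ((pt, px), q) \<in> normal_cone (epi (ext_fun A W)) ((t, x), real_of_ereal (W (t, x))) \<longrightarrow>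
             ereal (- pt) + Hbar U f l t x (- px) (- q) \<ge> 0)) \<and>
      (\<forall>t x. (t, x) \<in> edom (ext_fun A W) \<and> t \<in> C \<and> x \<in> interior A \<longrightarrow>
         (\<forall>pt px q. ((pt, px), q) \<in> normal_cone (epi (ext_fun A W)) ((t, x), real_of_ereal (W (t, x))) \<longrightarrow>
             ereal (- pt) + Hbar U f l t x (- px) (- q) = 0)))" for C
  proof -
    assume C: "full_measure_pos C"
    have tpos: "t \<in> C \<Longrightarrow> t > 0" for t using C unfolding full_measure_pos_def by auto
    have homge: "0 \<le> ereal (s * r) \<longleftrightarrow> 0 \<le> ereal r" if "s > 0" for s r :: real
      using that by (simp add: zero_le_mult_iff)
    have homeq: "ereal (s * r) = 0 \<longleftrightarrow> ereal r = 0" if "s > 0" for s r :: real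
      using that by simp
    have kge: "(t, x) \<in> edom (ext_fun A W) \<and> t \<in> C \<and> x \<in> frontier A \<Longrightarrow>
      ((\<forall>pt px. (pt, px) \<in> frechet_subdiff (ext_fun A W) (t, x) \<longrightarrow>
             - pt + H t x (- px) \<ge> 0) \<and>
         (\<forall>pt px. ((pt, px), 0) \<in> normal_cone (epi (ext_fun A W)) ((t, x), real_of_ereal (W (t, x))) \<longrightarrow>
             ereal (- pt) + (SUP v\<in>dom_conj H t x. ereal (v \<bullet> (- px))) \<ge> 0)) \<longleftrightarrow>
      (\<forall>pt px q. ((pt, px), q) \<in> normal_cone (epi (ext_fun A W)) ((t, x), real_of_ereal (W (t, x))) \<longrightarrow>
             ereal (- pt) + Hbar U f l t x (- px) (- q) \<ge> 0)" for t x
      using key[of t x "\<lambda>v. 0 \<le> v"] homge tpos frA unfolding \<phi>_def by auto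
    have keq: "(t, x) \<in> edom (ext_fun A W) \<and> t \<in> C \<and> x \<in> interior A \<Longrightarrow>
      ((\<forall>pt px. (pt, px) \<in> frechet_subdiff (ext_fun A W) (t, x) \<longrightarrow>
             - pt + H t x (- px) = 0) \<and>
         (\<forall>pt px. ((pt, px), 0) \<in> normal_cone (epi (ext_fun A W)) ((t, x), real_of_ereal (W (t, x))) \<longrightarrow>
             ereal (- pt) + (SUP v\<in>dom_conj H t x. ereal (v \<bullet> (- px))) = 0)) \<longleftrightarrow>
      (\<forall>pt px q. ((pt, px), q) \<in> normal_cone (epi (ext_fun A W)) ((t, x), real_of_ereal (W (t, x))) \<longrightarrow>
             ereal (- pt) + Hbar U f l t x (- px) (- q) = 0)" for t x
      using key[of t x "\<lambda>v. v = 0"] homeq tpos inA unfolding \<phi>_def by auto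
    show ?thesis
      apply (rule arg_cong2[where f="(\<and>)"])
       apply (rule all_cong1, rule all_cong1, rule imp_cong[OF refl], erule kge)
      apply (rule all_cong1, rule all_cong1, rule imp_cong[OF refl], erule keq)
      done
  qed
  show ?thesis unfolding weak_sol_I_def weak_sol_II_def
    apply (rule arg_cong2[where f="(\<and>)"], rule refl)
    apply (rule ex_cong1)
    apply (rule conj_cong[OF refl])
    apply (erule blocks)
    done
qed

end
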